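(* Let $n\ge 2$, $\rho^*\ge0$, $s>0$, and $k_\rho,k_z,k_\phi>0$. Consider the closed-loop system, for $i=1,\dots,n$, $$\dot\rho_i=k_\rho(\rho^*-\rho_i),\qquad \dot\phi_i=\frac{\Delta_i}{s}+k_\phi(\bar\phi_i-\phi_i),\qquad \dot z_i=-k_z z_i,$$ with $\bar\phi_i$ and $\Delta_i$ as defined in the context. Then for every initial condition, as $t\to\infty$, exponentially: $\rho_i\to\rho^*$, $\phi_i-\bar\phi_i\to0$, $\dot\phi_i\to \frac{2\pi}{ns}$, and $z_i\to0$, for all $i$.
   Context: There are $n$ robots with cylindrical coordinates $(\rho_i,\phi_i,z_i)$ relative to a target frame (radius, phase, height), whose dynamics after a feedback transformation are $\dot\rho_i,\dot\phi_i,\dot z_i$ equal to free inputs. The phases $\phi_i(t)$ are treated as real-valued (not reduced modulo $2\pi$), robots indexed in counterclockwise phase order at the initial time. Phase averages: $\bar\phi_1=\frac{\phi_2+\phi_n-2\pi}{2}$, $\bar\phi_i=\frac{\phi_{i+1}+\phi_{i-1}}{2}$ for $2\le i\le n-1$, $\bar\phi_n=\frac{\phi_1+2\pi+\phi_{n-1}}{2}$. Phase half-differences: $\Delta_1=\frac{\phi_2-\phi_n+2\pi}{2}$, $\Delta_i=\frac{\phi_{i+1}-\phi_{i-1}}{2}$ for $2\le i\le n-1$, $\Delta_n=\frac{\phi_1+2\pi-\phi_{n-1}}{2}$. *)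

theory Defs
  imports "HOL-Analysis.Analysis"
begin

text \<open>Phase snapshot: ph :: nat => real, robots indexed 1..n.\<close>

definition phase_avg :: "nat \<Rightarrow> (nat \<Rightarrow> real) \<Rightarrow> nat \<Rightarrow> real" where
  "phase_avg n ph i =
     (if i = 1 then (ph 2 + ph n - 2 * pi) / 2
      else if i = n then (ph 1 + 2 * pi + ph (n - 1)) / 2
      else (ph (i + 1) + ph (i - 1)) / 2)"

definition phase_halfdiff :: "nat \<Rightarrow> (nat \<Rightarrow> real) \<Rightarrow> nat \<Rightarrow> real" where
  "phase_halfdiff n ph i =
     (if i = 1 then (ph 2 - ph n + 2 * pi) / 2
      else if i = n then (ph 1 + 2 * pi - ph (n - 1)) / 2
      else (ph (i + 1) - ph (i - 1)) / 2)"

definition exp_conv :: "(real \<Rightarrow> real) \<Rightarrow> real \<Rightarrow> bool" where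
  "exp_conv f L \<longleftrightarrow> (\<exists>C r. r > 0 \<and> (\<forall>t\<ge>0. \<bar>f t - L\<bar> \<le> C * exp (- r * t)))"

end

theory Submission imports Defs begin

lemma mono_from_deriv:
  fixes g g' :: "real \<Rightarrow> real"
  assumes d: "\<And>t. t \<ge> 0 \<Longrightarrow> (g has_real_derivative g' t) (at t within {0..})"
    and neg: "\<And>t. t \<ge> 0 \<Longrightarrow> g' t \<le> 0" and t: "t \<ge> 0"
  shows "g t \<le> g 0"
proof (rule DERIV_nonpos_imp_decreasing_open[OF t])
  fix x :: real assume x: "0 < x" "x < t"
  have "interior {0::real..} = {0<..}" by simp
  then have "at x within {0..} = at x" using x by (intro at_within_interior) auto
  then show "\<exists>y. DERIV g x :> y \<and> y \<le> 0" using d[of x] neg[of x] x by auto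
next
  have "continuous_on {0..} g"
    using d by (auto simp: continuous_on_eq_continuous_within intro!: DERIV_continuous)
  then show "continuous_on {0..t} g" by (rule continuous_on_subset) auto
qed

lemma gronwall:
  fixes f f' :: "real \<Rightarrow> real" and a :: real
  assumes d: "\<And>t. t \<ge> 0 \<Longrightarrow> (f has_real_derivative f' t) (at t within {0..})"
    and le: "\<And>t. t \<ge> 0 \<Longrightarrow> f' t \<le> - a * f t" and t: "t \<ge> 0"
  shows "f t \<le> f 0 * exp (- a * t)"
proof -
  have "(\<lambda>t. f t * exp (a * t)) t \<le> (\<lambda>t. f t * exp (a * t)) 0"
  proof (rule mono_from_deriv[OF _ _ t])
    fix t :: real assume "t \<ge> 0"
    show "((\<lambda>t. f t * exp (a * t)) has_real_derivative (f' t * exp (a*t) + f t * (exp (a*t) * a))) (at t within {0..})"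
      by (auto intro!: derivative_eq_intros d[OF \<open>t\<ge>0\<close>])
    have "f' t + f t * a \<le> 0" using le[OF \<open>t\<ge>0\<close>] by (simp add: algebra_simps)
    then have "(f' t + f t * a) * exp (a*t) \<le> 0" by (simp add: mult_nonpos_nonneg)
    then show "f' t * exp (a*t) + f t * (exp (a*t) * a) \<le> 0" by (simp add: algebra_simps)
  qed
  then have "f t * exp (a*t) \<le> f 0" by simp
  then have "f t * exp (a*t) * exp (-a*t) \<le> f 0 * exp (-a*t)" by (simp add: mult_right_mono)
  then show ?thesis by (simp add: mult.assoc flip: exp_add)
qed

lemma sq_bound:
  fixes x C a t :: real
  assumes "x^2 \<le> C * exp (- a * t)"
  shows "\<bar>x\<bar> \<le> sqrt C * exp (- (a/2) * t)"
proof -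
  have "\<bar>x\<bar> = sqrt (x^2)" by simp
  also have "\<dots> \<le> sqrt (C * exp (- a * t))" using assms real_sqrt_le_mono by blast
  also have "sqrt (exp (- a * t)) = exp (- (a/2) * t)"
    by (rule real_sqrt_unique) (auto simp: power2_eq_square simp flip: exp_add)
  then have "sqrt (C * exp (- a * t)) = sqrt C * exp (- (a/2) * t)" by (simp add: real_sqrt_mult)
  finally show ?thesis .
qed

lemma poincare:
  fixes e :: "nat \<Rightarrow> real"
  assumes n: "n > 0" and s0: "(\<Sum>j<n. e j) = 0"
  shows "(\<Sum>j<n. (e j)^2) \<le> real n ^ 2 * (\<Sum>j<n. (e (Suc j) - e j)^2)"
proof -
  define S where "S = (\<Sum>j<n. \<bar>e (Suc j) - e j\<bar>)"
  have path: "\<bar>e l - e i\<bar> \<le> S" if "i \<le> l" "l < n" for i l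
  proof -
    have "e l - e i = (\<Sum>j=i..<l. e (Suc j) - e j)" using sum_Suc_diff'[OF that(1), of e] by simp
    then have "\<bar>e l - e i\<bar> \<le> (\<Sum>j=i..<l. \<bar>e (Suc j) - e j\<bar>)" by (simp add: sum_abs)
    also have "\<dots> \<le> S" unfolding S_def using that by (intro sum_mono2) auto
    finally show ?thesis .
  qed
  have path2: "\<bar>e i - e l\<bar> \<le> S" if "i < n" "l < n" for i l
    using path[of i l] path[of l i] that by (cases "i \<le> l") (auto simp: abs_minus_commute)
  have bnd: "(e i)^2 \<le> S^2" if "i < n" for i
  proof -
    have "real n * e i = (\<Sum>l<n. e i - e l)" using s0 by (simp add: sum_subtractf)
    then have "\<bar>real n * e i\<bar> \<le> (\<Sum>l<n. \<bar>e i - e l\<bar>)" by (simp add: sum_abs)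
    also have "\<dots> \<le> (\<Sum>l<n. S)" using path2 that by (intro sum_mono) auto
    finally have "real n * \<bar>e i\<bar> \<le> real n * S" by (simp add: abs_mult)
    then have "\<bar>e i\<bar> \<le> S" using n by simp
    then show ?thesis by (metis abs_ge_zero power2_abs power_mono)
  qed
  have "(\<Sum>j<n. (e j)^2) \<le> (\<Sum>j<n. S^2)" using bnd by (intro sum_mono) auto
  also have "\<dots> = real n * S^2" by simp
  also have "S^2 \<le> (\<Sum>j<n. (e (Suc j) - e j)^2) * real n"
    using sum_squared_le_sum_of_squares[of "\<lambda>j. \<bar>e (Suc j) - e j\<bar>" "{..<n}"] unfolding S_def by simp
  then have "real n * S^2 \<le> real n * ((\<Sum>j<n. (e (Suc j) - e j)^2) * real n)"
    by (intro mult_left_mono) auto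
  finally show ?thesis by (simp add: power2_eq_square algebra_simps)
qed

definition Pf :: "nat \<Rightarrow> (nat \<Rightarrow> real) \<Rightarrow> nat \<Rightarrow> real" where
  "Pf n ph j = ph (j mod n + 1) + 2 * pi * real (j div n)"
definition Df :: "nat \<Rightarrow> (nat \<Rightarrow> real) \<Rightarrow> nat \<Rightarrow> real" where
  "Df n ph j = Pf n ph (Suc j) - Pf n ph j"

lemma Pf_add: "n > 0 \<Longrightarrow> Pf n ph (m + n) = Pf n ph m + 2 * pi"
  by (simp add: Pf_def algebra_simps)

lemma Df_add: "n > 0 \<Longrightarrow> Df n ph (m + n) = Df n ph m"
  using Pf_add[of n ph m] Pf_add[of n ph "Suc m"] by (simp add: Df_def)

lemma Df_mod: assumes "n > 0" shows "Df n ph m = Df n ph (m mod n)"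
proof (induction m rule: less_induct)
  case (less m)
  show ?case
  proof (cases "m < n")
    case False
    then have "m = (m - n) + n" by simp
    then have "Df n ph m = Df n ph (m - n)" using Df_add[OF assms, of ph "m-n"] by simp
    also have "\<dots> = Df n ph ((m - n) mod n)" using less assms False by simp
    also have "(m - n) mod n = m mod n" using False by (simp add: le_mod_geq)
    finally show ?thesis .
  qed simp
qed

lemma Df_sum: "n > 0 \<Longrightarrow> (\<Sum>j<n. Df n ph j) = 2 * pi"
  unfolding Df_def by (simp only: sum_lessThan_telescope) (simp add: Pf_def)

lemma Df_low: "Suc m < n \<Longrightarrow> Df n ph m = ph (m + 2) - ph (m + 1)"
  by (simp add: Df_def Pf_def)

lemma Df_top: "n > 0 \<Longrightarrow> Df n ph (n - 1) = ph 1 + 2 * pi - ph n"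
  by (simp add: Df_def Pf_def)

lemma local_eqs:
  assumes n: "n \<ge> 2" and j: "j < n"
  shows "phase_halfdiff n ph (Suc j) = (Df n ph j + Df n ph (j + n - 1)) / 2"
    and "phase_avg n ph (Suc j) - ph (Suc j) = (Df n ph j - Df n ph (j + n - 1)) / 2"
proof -
  have A: "phase_halfdiff n ph (Suc j) = (Df n ph j + Df n ph (j + n - 1)) / 2 \<and>
     phase_avg n ph (Suc j) - ph (Suc j) = (Df n ph j - Df n ph (j + n - 1)) / 2"
  proof (cases "j = 0")
    case True
    then show ?thesis using n Df_low[of 0 n ph] Df_top[of n ph]
      by (simp add: phase_halfdiff_def phase_avg_def numeral_2_eq_2 field_simps)
  next
    case False
    then have jn: "Df n ph (j + n - 1) = Df n ph (j - 1)"
      using Df_add[of n ph "j - 1"] n by (simp add: algebra_simps)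
    have lo: "Df n ph (j - 1) = ph (j + 1) - ph j" using Df_low[of "j-1" n ph] False j by simp
    show ?thesis
    proof (cases "Suc j = n")
      case True
      then have "Df n ph j = ph 1 + 2 * pi - ph n" "ph (n - 1) = ph j" using Df_top[of n ph] by auto
      then show ?thesis using True n False jn lo
        by (simp add: phase_halfdiff_def phase_avg_def numeral_2_eq_2 field_simps)
    next
      case F2: False
      then show ?thesis using n False j jn lo Df_low[of j n ph]
        by (simp add: phase_halfdiff_def phase_avg_def numeral_2_eq_2 field_simps)
    qed
  qed
  then show "phase_halfdiff n ph (Suc j) = (Df n ph j + Df n ph (j + n - 1)) / 2"
    and "phase_avg n ph (Suc j) - ph (Suc j) = (Df n ph j - Df n ph (j + n - 1)) / 2" by auto
qed

lemma linear_decay: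
  fixes w w' :: "real \<Rightarrow> real" and k L :: real
  assumes d: "\<And>t. t \<ge> 0 \<Longrightarrow> (w has_real_derivative w' t) (at t within {0..})"
    and eq: "\<And>t. w' t = - k * (w t - L)" and k: "k > 0"
  shows "exp_conv w L"
proof -
  define f where "f t = (w t - L)^2" for t
  have df: "(f has_real_derivative 2 * (w t - L) * w' t) (at t within {0..})" if "t \<ge> 0" for t
    unfolding f_def by (auto intro!: derivative_eq_intros d[OF that])
  have le: "2 * (w t - L) * w' t \<le> - (2 * k) * f t" for t
    unfolding eq f_def by (simp add: power2_eq_square algebra_simps)
  have "\<bar>w t - L\<bar> \<le> sqrt (f 0) * exp (- ((2 * k) / 2) * t)" if "t \<ge> 0" for t
    using sq_bound[of "w t - L" "f 0" "2 * k" t] gronwall[OF df le that] unfolding f_def by simp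
  then show ?thesis unfolding exp_conv_def using k by (intro exI[of _ "sqrt (f 0)"] exI[of _ "(2 * k) / 2"]) auto
qed

theorem proposition2:
  fixes n :: nat and rho_star s k_rho k_z k_phi :: real
    and rho phi z :: "nat \<Rightarrow> real \<Rightarrow> real"
  assumes "n \<ge> 2" and "rho_star \<ge> 0" and "s > 0"
    and "k_rho > 0" and "k_z > 0" and "k_phi > 0"
    and order0: "\<forall>i. 1 \<le> i \<and> i < n \<longrightarrow> phi i 0 \<le> phi (i + 1) 0"
    and order0': "phi n 0 \<le> phi 1 0 + 2 * pi"
    and drho: "\<And>i t. 1 \<le> i \<Longrightarrow> i \<le> n \<Longrightarrow> t \<ge> 0 \<Longrightarrow>
       ((rho i) has_real_derivative (k_rho * (rho_star - rho i t))) (at t within {0..})"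
    and dphi: "\<And>i t. 1 \<le> i \<Longrightarrow> i \<le> n \<Longrightarrow> t \<ge> 0 \<Longrightarrow>
       ((phi i) has_real_derivative
          (phase_halfdiff n (\<lambda>j. phi j t) i / s
           + k_phi * (phase_avg n (\<lambda>j. phi j t) i - phi i t))) (at t within {0..})"
    and dz: "\<And>i t. 1 \<le> i \<Longrightarrow> i \<le> n \<Longrightarrow> t \<ge> 0 \<Longrightarrow>
       ((z i) has_real_derivative (- k_z * z i t)) (at t within {0..})"
  shows "\<forall>i. 1 \<le> i \<and> i \<le> n \<longrightarrow>
           exp_conv (rho i) rho_star
         \<and> exp_conv (\<lambda>t. phi i t - phase_avg n (\<lambda>j. phi j t) i) 0
         \<and> exp_conv (\<lambda>t. phase_halfdiff n (\<lambda>j. phi j t) i / s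
                         + k_phi * (phase_avg n (\<lambda>j. phi j t) i - phi i t)) (2 * pi / (real n * s))
         \<and> exp_conv (z i) 0"
proof -
  have n0: "n > 0" using assms(1) by simp
  define D where "D t j = Df n (\<lambda>i. phi i t) j" for t j
  define c where "c = 2 * pi / real n"
  define G where "G t j = ((D t j + D t (j + n - 1)) / 2) / s + k_phi * ((D t j - D t (j + n - 1)) / 2)" for t j
  have Dmod: "D t m = D t (m mod n)" for t m unfolding D_def using Df_mod[OF n0] by blast
  have Dadd: "D t (m + n) = D t m" for t m unfolding D_def using Df_add[OF n0] by blast
  have Gmod: "G t m = G t (m mod n)" for t m
  proof -
    have "(m + n - 1) mod n = (m mod n + n - 1) mod n"
      using n0 mod_add_left_eq[of m n "n - 1"] by simp
    then have "D t (m + n - 1) = D t (m mod n + n - 1)" using Dmod by metis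
    moreover have "D t m = D t (m mod n)" by (rule Dmod)
    ultimately show ?thesis unfolding G_def by simp
  qed
  have dphij: "((phi (Suc j)) has_real_derivative G t j) (at t within {0..})" if "j < n" "t \<ge> 0" for j t
    using dphi[of "Suc j" t] that local_eqs[OF assms(1) that(1), of "\<lambda>i. phi i t"]
    by (simp add: G_def D_def)
  have dP: "((\<lambda>t. Pf n (\<lambda>i. phi i t) m) has_real_derivative G t m) (at t within {0..})" if "t \<ge> 0" for m t
  proof -
    have "((\<lambda>t. phi (Suc (m mod n)) t + 2 * pi * real (m div n)) has_real_derivative G t (m mod n) + 0) (at t within {0..})"
      by (intro derivative_intros dphij) (use n0 that in auto)
    then show ?thesis using Gmod[of t m] by (simp add: Pf_def)
  qed
  have dD: "((\<lambda>t. D t j) has_real_derivative G t (Suc j) - G t j) (at t within {0..})" if "t \<ge> 0" for j t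
    unfolding D_def Df_def by (intro derivative_intros dP that)
  define V where "V t = (\<Sum>j<n. (D t j - c)^2)" for t
  define V' where "V' t = (\<Sum>j<n. 2 * (D t j - c) * (G t (Suc j) - G t j))" for t
  have dV: "(V has_real_derivative V' t) (at t within {0..})" if "t \<ge> 0" for t
    unfolding V_def V'_def
    by (rule DERIV_sum) (auto intro!: derivative_eq_intros dD[OF that])
  have ident: "(\<Sum>j<n. (D t j - c) * (G t (Suc j) - G t j)) = - (k_phi/2) * (\<Sum>j<n. (D t (Suc j) - D t j)^2)" for t
  proof -
    define T where "T j = (inverse (2 * s) - k_phi / 2) * (D t j * D t (j + n - 1)) + (k_phi/2) * (D t j)^2 - c * G t j" for j
    have sh: "D t (Suc j + n - 1) = D t j" for j using Dadd[of t j] by simp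
    have pw: "(D t j - c) * (G t (Suc j) - G t j) = - (k_phi/2) * (D t (Suc j) - D t j)^2 + (T (Suc j) - T j)" for j
      unfolding T_def G_def sh using assms(3) by (simp add: field_simps power2_eq_square)
    have Tn: "T n = T 0"
    proof -
      have "D t n = D t 0" using Dadd[of t 0] by simp
      moreover have "D t (n + n - 1) = D t (0 + n - 1)" using Dadd[of t "n - 1"] n0 by simp
      moreover have "G t n = G t 0" using Gmod[of t n] by simp
      ultimately show ?thesis unfolding T_def by simp
    qed
    have "(\<Sum>j<n. (D t j - c) * (G t (Suc j) - G t j)) = (\<Sum>j<n. - (k_phi/2) * (D t (Suc j) - D t j)^2) + (\<Sum>j<n. T (Suc j) - T j)"
      unfolding pw by (simp only: sum.distrib)
    also have "(\<Sum>j<n. T (Suc j) - T j) = 0" using Tn by (simp only: sum_lessThan_telescope)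
    finally show ?thesis by (simp add: sum_distrib_left)
  qed
  define a where "a = k_phi / real n ^ 2"
  have a0: "a > 0" unfolding a_def using assms n0 by simp
  have Vle: "V' t \<le> - a * V t" if "t \<ge> 0" for t
  proof -
    define e where "e j = D t j - c" for j
    have "(\<Sum>j<n. e j) = (\<Sum>j<n. D t j) - real n * c" unfolding e_def by (simp add: sum_subtractf)
    also have "(\<Sum>j<n. D t j) = 2 * pi" unfolding D_def by (rule Df_sum[OF n0])
    finally have "(\<Sum>j<n. e j) = 0" unfolding c_def using n0 by simp
    from poincare[OF n0 this] have P: "V t \<le> real n ^ 2 * (\<Sum>j<n. (D t (Suc j) - D t j)^2)"
      unfolding V_def e_def by simp
    have "V' t = 2 * (\<Sum>j<n. (D t j - c) * (G t (Suc j) - G t j))"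
      unfolding V'_def sum_distrib_left by (intro sum.cong) (auto simp: algebra_simps)
    also have "\<dots> = - k_phi * (\<Sum>j<n. (D t (Suc j) - D t j)^2)" using ident by simp
    finally have "V' t = - k_phi * (\<Sum>j<n. (D t (Suc j) - D t j)^2)" .
    moreover have "a * V t \<le> k_phi * (\<Sum>j<n. (D t (Suc j) - D t j)^2)"
    proof -
      have "a * V t \<le> a * (real n ^ 2 * (\<Sum>j<n. (D t (Suc j) - D t j)^2))"
        using P a0 by (intro mult_left_mono) auto
      then show ?thesis unfolding a_def using n0 by simp
    qed
    ultimately show ?thesis by simp
  qed
  have Vexp: "V t \<le> V 0 * exp (- a * t)" if "t \<ge> 0" for t
    by (rule gronwall[OF dV Vle that])
  define B where "B = sqrt (V 0)"
  have ebound: "\<bar>D t m - c\<bar> \<le> B * exp (- (a/2) * t)" if "t \<ge> 0" for t m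
  proof -
    have "(D t m - c)^2 = (D t (m mod n) - c)^2" using Dmod by metis
    also have "\<dots> \<le> V t" unfolding V_def using n0
      by (intro member_le_sum) auto
    also have "\<dots> \<le> V 0 * exp (- a * t)" by (rule Vexp[OF that])
    finally show ?thesis unfolding B_def by (rule sq_bound)
  qed
  show ?thesis
  proof (intro allI impI conjI)
    fix i assume i: "1 \<le> i \<and> i \<le> n"
    then obtain j where j: "i = Suc j" "j < n" by (cases i) auto
    show "exp_conv (rho i) rho_star"
      by (rule linear_decay[where k = k_rho]) (use drho i assms(4) in \<open>auto simp: algebra_simps\<close>)
    show "exp_conv (z i) 0"
      by (rule linear_decay[where k = k_z]) (use dz i assms(5) in auto)
    have L: "phase_halfdiff n (\<lambda>j. phi j t) i = (D t j + D t (j + n - 1)) / 2"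
      "phase_avg n (\<lambda>j. phi j t) i - phi i t = (D t j - D t (j + n - 1)) / 2" for t
      using local_eqs[OF assms(1) j(2), of "\<lambda>i. phi i t"] j unfolding D_def by auto
    have r0: "a / 2 > 0" using a0 by simp
    show "exp_conv (\<lambda>t. phi i t - phase_avg n (\<lambda>j. phi j t) i) 0"
      unfolding exp_conv_def
    proof (rule exI[of _ B], rule exI[of _ "a/2"], intro conjI allI impI r0)
      fix t :: real assume t: "t \<ge> 0"
      have "phi i t - phase_avg n (\<lambda>j. phi j t) i = - ((D t j - c) - (D t (j + n - 1) - c)) / 2"
        using L(2)[of t] by (simp add: algebra_simps)
      moreover have "\<bar>D t j - c\<bar> \<le> B * exp (- (a/2) * t)" "\<bar>D t (j + n - 1) - c\<bar> \<le> B * exp (- (a/2) * t)"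
        using ebound[OF t] by auto
      ultimately show "\<bar>phi i t - phase_avg n (\<lambda>j. phi j t) i - 0\<bar> \<le> B * exp (- (a/2) * t)"
        by (simp add: abs_le_iff)
    qed
    show "exp_conv (\<lambda>t. phase_halfdiff n (\<lambda>j. phi j t) i / s
                         + k_phi * (phase_avg n (\<lambda>j. phi j t) i - phi i t)) (2 * pi / (real n * s))"
      unfolding exp_conv_def
    proof (rule exI[of _ "(1/s + k_phi) * B"], rule exI[of _ "a/2"], intro conjI allI impI r0)
      fix t :: real assume t: "t \<ge> 0"
      define x where "x = D t j - c"
      define y where "y = D t (j + n - 1) - c"
      define E where "E = B * exp (- (a/2) * t)"
      have eq: "phase_halfdiff n (\<lambda>j. phi j t) i / s + k_phi * (phase_avg n (\<lambda>j. phi j t) i - phi i t) - 2 * pi / (real n * s)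
         = ((x + y) / 2) / s + k_phi * ((x - y) / 2)"
        unfolding L x_def y_def c_def using assms(3) n0 by (simp add: field_simps)
      have xb: "\<bar>x\<bar> \<le> E" "\<bar>y\<bar> \<le> E" unfolding x_def y_def E_def using ebound[OF t] by auto
      have b1: "\<bar>((x + y) / 2) / s\<bar> \<le> E / s"
      proof -
        have "\<bar>(x + y) / 2\<bar> \<le> E" using xb by (simp add: abs_le_iff)
        then show ?thesis using assms(3) by (simp add: abs_divide divide_simps)
      qed
      have b2: "\<bar>k_phi * ((x - y) / 2)\<bar> \<le> k_phi * E"
      proof -
        have "\<bar>(x - y) / 2\<bar> \<le> E" using xb by (simp add: abs_le_iff)
        then show ?thesis using assms(6) by (simp add: abs_mult mult_left_mono)
      qed
      have "\<bar>phase_halfdiff n (\<lambda>j. phi j t) i / s + k_phi * (phase_avg n (\<lambda>j. phi j t) i - phi i t) - 2 * pi / (real n * s)\<bar>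
          = \<bar>((x + y) / 2) / s + k_phi * ((x - y) / 2)\<bar>" by (simp only: eq)
      also have "\<dots> \<le> \<bar>((x + y) / 2) / s\<bar> + \<bar>k_phi * ((x - y) / 2)\<bar>" by (rule abs_triangle_ineq)
      also have "\<dots> \<le> E / s + k_phi * E" using b1 b2 by simp
      also have "\<dots> = (1/s + k_phi) * B * exp (- (a/2) * t)" unfolding E_def by (simp add: algebra_simps)
      finally show "\<bar>phase_halfdiff n (\<lambda>j. phi j t) i / s + k_phi * (phase_avg n (\<lambda>j. phi j t) i - phi i t) - 2 * pi / (real n * s)\<bar>
          \<le> (1/s + k_phi) * B * exp (- (a/2) * t)" .
    qed
  qed
qed

end
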